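(* Let $\mathbb{K}$ be a field of characteristic $2$ and let $(A,\cdot,\{-,-\},(-)^{\{2\}})$ be a restricted Poisson algebra. Then the second cohomology space $\mathrm{H}^2_{\rm PA}(A)$ classifies the infinitesimal deformations of $A$ up to equivalence: assigning to an infinitesimal deformation $(A^t_1,\cdot,\{-,-\}+t\mu_1,(-)^{\{2\}}+t\omega_1)$ the class of $(\mu_1,\omega_1)$ gives a bijection between equivalence classes of infinitesimal deformations and $\mathrm{H}^2_{\rm PA}(A)$.
   Context: $\mathbb{K}$ has characteristic $2$. Restricted Poisson algebra: commutative associative $(A,\cdot)$ with Lie bracket satisfying $\{ab,c\}=a\{b,c\}+b\{a,c\}$, with a map $(-)^{\{2\}}$ making $(A,\{,\})$ a restricted Lie algebra ($(\lambda x)^{\{2\}}=\lambda^2x^{\{2\}}$, $\mathrm{ad}_{x^{\{2\}}}=\mathrm{ad}_x^2$, $(x+y)^{\{2\}}=x^{\{2\}}+y^{\{2\}}+\{x,y\}$) and $(xy)^{\{2\}}=x^2y^{\{2\}}+y^2x^{\{2\}}+xy\{x,y\}$. $\mathfrak{X}^k(A)$: alternating $k$-linear maps $A^k\to A$ that are derivations of $\cdot$ in each argument. $C^1_{\rm PA}(A)=\mathfrak{X}^1(A)$; for $n\ge2$, $C^n_{\rm PA}(A)$ = pairs $(\varphi,\omega)$, $\varphi\in\mathfrak{X}^n(A)$, $\omega:A\times A^{n-2}\to A$ alternating multilinear in last $n-2$ arguments, with $\omega(\lambda x,z)=\lambda^2\omega(x,z)$, $\omega(x+y,z)=\omega(x,z)+\omega(y,z)+\varphi(x,y,z)$,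 $\omega(xy,z)=x^2\omega(y,z)+y^2\omega(x,z)+xy\varphi(x,y,z)$, $\omega(x,..,z_iz_i',..)=z_i\omega(x,..,z_i',..)+z_i'\omega(x,..,z_i,..)$. Differentials: $\mathrm{d}^1\psi=(\mathrm{d}_{\rm CE}\psi,\delta^1\psi)$ with $\mathrm{d}_{\rm CE}\psi(x,y)=\psi(\{x,y\})+\{x,\psi(y)\}+\{y,\psi(x)\}$, $\delta^1\psi(x)=\psi(x^{\{2\}})+\{x,\psi(x)\}$; $\mathrm{d}^2(\varphi,\omega)=(\mathrm{d}_{\rm CE}\varphi,\delta^2\omega)$ with $\mathrm{d}_{\rm CE}\varphi(x,y,z)=\varphi(\{x,y\},z)+\varphi(\{x,z\},y)+\varphi(\{y,z\},x)+\{x,\varphi(y,z)\}+\{y,\varphi(x,z)\}+\{z,\varphi(x,y)\}$ and $\delta^2\omega(x,z)=\{x,\varphi(x,z)\}+\{z,\omega(x)\}+\varphi(x^{\{2\}},z)+\varphi(\{x,z\},x)$. $\mathrm{H}^2_{\rm PA}(A)=\ker\mathrm{d}^2/\mathrm{im}\,\mathrm{d}^1$ in $C^2_{\rm PA}(A)$. Let $\mathbb{K}^t_k=\mathbb{K}[t]/(t^{k+1})$ and $A^t_k=A\otimes\mathbb{K}^t_k$ with the $\mathbb{K}^t_k$-bilinear extension of $\cdot$. A deformation of order $k$ is given by $\mu_{(k)}=\{-,-\}+\sum_{i=1}^kt^i\mu_i$ and $\omega_{(k)}=(-)^{\{2\}}+\sum_{i=1}^kt^i\omega_i$ with $(\mu_i,\omega_i)\in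 C^2_{\rm PA}(A)$, such that $(A^t_k,\mu_{(k)},\omega_{(k)})$ (with $\mu_{(k)}$ extended $\mathbb{K}^t_k$-bilinearly and $\omega_{(k)}$ extended by $\omega(\lambda X)=\lambda^2\omega(X)$, $\omega(X+Y)=\omega(X)+\omega(Y)+\mu(X,Y)$) is a restricted Lie algebra over $\mathbb{K}^t_k$. Infinitesimal means $k=1$. Two deformations of order $k$ are equivalent if there is an isomorphism of restricted Poisson algebras between them of the form $\Psi=\mathrm{id}+\sum_{i\ge1}t^i\psi_i$ with $\psi_i:A\to A$ linear. *)

theory Defs
  imports Main "HOL.Modules" "HOL-Library.Product_Plus"
begin

datatype 'k dual = Dual (re: 'k) (ep: 'k)

instantiation dual :: (comm_ring_1) comm_ring_1
begin
definition "0 = Dual 0 0"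
definition "1 = Dual 1 0"
definition "x + y = Dual (re x + re y) (ep x + ep y)"
definition "x - y = Dual (re x - re y) (ep x - ep y)"
definition "- x = Dual (- re x) (- ep x)"
definition "x * y = Dual (re x * re y) (re x * ep y + ep x * re y)"
instance
  by standard
    (auto simp: zero_dual_def one_dual_def plus_dual_def minus_dual_def
       uminus_dual_def times_dual_def algebra_simps dual.expand)
end

definition restricted_lie ::
  "('r::comm_ring_1 \<Rightarrow> 'm::ab_group_add \<Rightarrow> 'm) \<Rightarrow> ('m \<Rightarrow> 'm \<Rightarrow> 'm) \<Rightarrow> ('m \<Rightarrow> 'm) \<Rightarrow> bool" where
  "restricted_lie sc br p \<longleftrightarrow>
     module sc \<and>
     (\<forall>x y z. br (x + y) z = br x z + br y z) \<and>
     (\<forall>x y z. br x (y + z) = br x y + br x z) \<and>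
     (\<forall>c x y. br (sc c x) y = sc c (br x y)) \<and>
     (\<forall>c x y. br x (sc c y) = sc c (br x y)) \<and>
     (\<forall>x. br x x = 0) \<and>
     (\<forall>x y z. br x (br y z) + br y (br z x) + br z (br x y) = 0) \<and>
     (\<forall>c x. p (sc c x) = sc (c * c) (p x)) \<and>
     (\<forall>x y. br (p x) y = br x (br x y)) \<and>
     (\<forall>x y. p (x + y) = p x + p y + br x y)"

definition comm_algebra :: "('k::field \<Rightarrow> 'a::comm_ring \<Rightarrow> 'a) \<Rightarrow> bool" where
  "comm_algebra sc \<longleftrightarrow> module sc \<and>
     (\<forall>c x y. sc c (x * y) = sc c x * y)"

definition restricted_poisson ::
  "('k::field \<Rightarrow> 'a::comm_ring \<Rightarrow> 'a) \<Rightarrow> ('a \<Rightarrow> 'a \<Rightarrow> 'a) \<Rightarrow> ('a \<Rightarrow> 'a) \<Rightarrow> bool" where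
  "restricted_poisson sc br p \<longleftrightarrow>
     comm_algebra sc \<and> restricted_lie sc br p \<and>
     (\<forall>a b c. br (a * b) c = a * br b c + b * br a c) \<and>
     (\<forall>x y. p (x * y) = x * x * p y + y * y * p x + x * y * br x y)"

definition klinear :: "('k::field \<Rightarrow> 'a::comm_ring \<Rightarrow> 'a) \<Rightarrow> ('a \<Rightarrow> 'a) \<Rightarrow> bool" where
  "klinear sc f \<longleftrightarrow> (\<forall>x y. f (x + y) = f x + f y) \<and> (\<forall>c x. f (sc c x) = sc c (f x))"

definition derivation :: "('k::field \<Rightarrow> 'a::comm_ring \<Rightarrow> 'a) \<Rightarrow> ('a \<Rightarrow> 'a) \<Rightarrow> bool" where
  "derivation sc f \<longleftrightarrow> klinear sc f \<and> (\<forall>x y. f (x * y) = x * f y + y * f x)"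

definition X2 :: "('k::field \<Rightarrow> 'a::comm_ring \<Rightarrow> 'a) \<Rightarrow> ('a \<Rightarrow> 'a \<Rightarrow> 'a) \<Rightarrow> bool" where
  "X2 sc \<phi> \<longleftrightarrow> (\<forall>x. \<phi> x x = 0) \<and>
     (\<forall>z. derivation sc (\<lambda>x. \<phi> x z)) \<and> (\<forall>x. derivation sc (\<lambda>z. \<phi> x z))"

definition C2 :: "('k::field \<Rightarrow> 'a::comm_ring \<Rightarrow> 'a) \<Rightarrow> (('a \<Rightarrow> 'a \<Rightarrow> 'a) \<times> ('a \<Rightarrow> 'a)) set" where
  "C2 sc = {(\<phi>, \<omega>). X2 sc \<phi> \<and>
     (\<forall>c x. \<omega> (sc c x) = sc (c * c) (\<omega> x)) \<and>
     (\<forall>x y. \<omega> (x + y) = \<omega> x + \<omega> y + \<phi> x y) \<and>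
     (\<forall>x y. \<omega> (x * y) = x * x * \<omega> y + y * y * \<omega> x + x * y * \<phi> x y)}"

definition dCE1 :: "('a \<Rightarrow> 'a \<Rightarrow> 'a::comm_ring) \<Rightarrow> ('a \<Rightarrow> 'a) \<Rightarrow> 'a \<Rightarrow> 'a \<Rightarrow> 'a" where
  "dCE1 br \<psi> x y = \<psi> (br x y) + br x (\<psi> y) + br y (\<psi> x)"

definition delta1 :: "('a \<Rightarrow> 'a \<Rightarrow> 'a::comm_ring) \<Rightarrow> ('a \<Rightarrow> 'a) \<Rightarrow> ('a \<Rightarrow> 'a) \<Rightarrow> 'a \<Rightarrow> 'a" where
  "delta1 br p \<psi> x = \<psi> (p x) + br x (\<psi> x)"

definition dCE2 :: "('a \<Rightarrow> 'a \<Rightarrow> 'a::comm_ring) \<Rightarrow> ('a \<Rightarrow> 'a \<Rightarrow> 'a) \<Rightarrow> 'a \<Rightarrow> 'a \<Rightarrow> 'a \<Rightarrow> 'a" where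
  "dCE2 br \<phi> x y z = \<phi> (br x y) z + \<phi> (br x z) y + \<phi> (br y z) x
     + br x (\<phi> y z) + br y (\<phi> x z) + br z (\<phi> x y)"

definition delta2 :: "('a \<Rightarrow> 'a \<Rightarrow> 'a::comm_ring) \<Rightarrow> ('a \<Rightarrow> 'a) \<Rightarrow> ('a \<Rightarrow> 'a \<Rightarrow> 'a) \<Rightarrow> ('a \<Rightarrow> 'a) \<Rightarrow> 'a \<Rightarrow> 'a \<Rightarrow> 'a" where
  "delta2 br p \<phi> \<omega> x z = br x (\<phi> x z) + br z (\<omega> x) + \<phi> (p x) z + \<phi> (br x z) x"

definition Z2 :: "('k::field \<Rightarrow> 'a::comm_ring \<Rightarrow> 'a) \<Rightarrow> ('a \<Rightarrow> 'a \<Rightarrow> 'a) \<Rightarrow> ('a \<Rightarrow> 'a)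
    \<Rightarrow> (('a \<Rightarrow> 'a \<Rightarrow> 'a) \<times> ('a \<Rightarrow> 'a)) set" where
  "Z2 sc br p = {(\<phi>, \<omega>) \<in> C2 sc. dCE2 br \<phi> = (\<lambda>x y z. 0) \<and> delta2 br p \<phi> \<omega> = (\<lambda>x z. 0)}"

definition coh_rel :: "('k::field \<Rightarrow> 'a::comm_ring \<Rightarrow> 'a) \<Rightarrow> ('a \<Rightarrow> 'a \<Rightarrow> 'a) \<Rightarrow> ('a \<Rightarrow> 'a)
    \<Rightarrow> ((('a \<Rightarrow> 'a \<Rightarrow> 'a) \<times> ('a \<Rightarrow> 'a)) \<times> (('a \<Rightarrow> 'a \<Rightarrow> 'a) \<times> ('a \<Rightarrow> 'a))) set" where
  "coh_rel sc br p = {((\<phi>, \<omega>), (\<phi>', \<omega>')).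
     (\<phi>, \<omega>) \<in> Z2 sc br p \<and> (\<phi>', \<omega>') \<in> Z2 sc br p \<and>
     (\<exists>\<psi>. derivation sc \<psi> \<and>
        (\<lambda>x y. \<phi> x y - \<phi>' x y) = dCE1 br \<psi> \<and> (\<lambda>x. \<omega> x - \<omega>' x) = delta1 br p \<psi>)}"

definition H2 :: "('k::field \<Rightarrow> 'a::comm_ring \<Rightarrow> 'a) \<Rightarrow> ('a \<Rightarrow> 'a \<Rightarrow> 'a) \<Rightarrow> ('a \<Rightarrow> 'a)
    \<Rightarrow> (('a \<Rightarrow> 'a \<Rightarrow> 'a) \<times> ('a \<Rightarrow> 'a)) set set" where
  "H2 sc br p = Z2 sc br p // coh_rel sc br p"

text \<open>A^t_1 = A \<otimes> K[t]/(t^2) is represented by pairs (a, b) meaning a + t b.\<close>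

definition dual_scale :: "('k::field \<Rightarrow> 'a::comm_ring \<Rightarrow> 'a) \<Rightarrow> 'k dual \<Rightarrow> 'a \<times> 'a \<Rightarrow> 'a \<times> 'a" where
  "dual_scale sc l X = (sc (re l) (fst X), sc (re l) (snd X) + sc (ep l) (fst X))"

definition t_mult :: "'a::comm_ring \<times> 'a \<Rightarrow> 'a \<times> 'a \<Rightarrow> 'a \<times> 'a" where
  "t_mult X Y = (fst X * fst Y, fst X * snd Y + snd X * fst Y)"

text \<open>mu_(1) = {-,-} + t mu_1, extended K^t_1-bilinearly.\<close>
definition t_bracket :: "('a \<Rightarrow> 'a \<Rightarrow> 'a::comm_ring) \<Rightarrow> ('a \<Rightarrow> 'a \<Rightarrow> 'a) \<Rightarrow> 'a \<times> 'a \<Rightarrow> 'a \<times> 'a \<Rightarrow> 'a \<times> 'a" where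
  "t_bracket br \<mu> X Y = (br (fst X) (fst Y),
       br (fst X) (snd Y) + br (snd X) (fst Y) + \<mu> (fst X) (fst Y))"

text \<open>omega_(1) = (-)^[2] + t omega_1, extended by omega(lambda X) = lambda^2 omega(X) and
  omega(X+Y) = omega X + omega Y + mu(X,Y):  omega(a + t b) = a^[2] + t (omega_1 a + {a,b}).\<close>
definition t_pmap :: "('a \<Rightarrow> 'a \<Rightarrow> 'a::comm_ring) \<Rightarrow> ('a \<Rightarrow> 'a) \<Rightarrow> ('a \<Rightarrow> 'a) \<Rightarrow> 'a \<times> 'a \<Rightarrow> 'a \<times> 'a" where
  "t_pmap br p \<omega> X = (p (fst X), \<omega> (fst X) + br (fst X) (snd X))"

definition inf_deformations :: "('k::field \<Rightarrow> 'a::comm_ring \<Rightarrow> 'a) \<Rightarrow> ('a \<Rightarrow> 'a \<Rightarrow> 'a) \<Rightarrow> ('a \<Rightarrow> 'a)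
    \<Rightarrow> (('a \<Rightarrow> 'a \<Rightarrow> 'a) \<times> ('a \<Rightarrow> 'a)) set" where
  "inf_deformations sc br p = {(\<mu>, \<omega>). (\<mu>, \<omega>) \<in> C2 sc \<and>
     restricted_lie (dual_scale sc) (t_bracket br \<mu>) (t_pmap br p \<omega>)}"

text \<open>Psi = id + t psi_1, extended K^t_1-linearly: Psi(a + t b) = a + t (b + psi_1 a).\<close>
definition t_Psi :: "('a::comm_ring \<Rightarrow> 'a) \<Rightarrow> 'a \<times> 'a \<Rightarrow> 'a \<times> 'a" where
  "t_Psi \<psi> X = (fst X, snd X + \<psi> (fst X))"

definition deformation_equiv :: "('k::field \<Rightarrow> 'a::comm_ring \<Rightarrow> 'a) \<Rightarrow> ('a \<Rightarrow> 'a \<Rightarrow> 'a) \<Rightarrow> ('a \<Rightarrow> 'a)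
    \<Rightarrow> ((('a \<Rightarrow> 'a \<Rightarrow> 'a) \<times> ('a \<Rightarrow> 'a)) \<times> (('a \<Rightarrow> 'a \<Rightarrow> 'a) \<times> ('a \<Rightarrow> 'a))) set" where
  "deformation_equiv sc br p = {((\<mu>, \<omega>), (\<mu>', \<omega>')).
     (\<mu>, \<omega>) \<in> inf_deformations sc br p \<and> (\<mu>', \<omega>') \<in> inf_deformations sc br p \<and>
     (\<exists>\<psi>. klinear sc \<psi> \<and>
        bij (t_Psi \<psi>) \<and>
        (\<forall>X Y. t_Psi \<psi> (t_mult X Y) = t_mult (t_Psi \<psi> X) (t_Psi \<psi> Y)) \<and>
        (\<forall>X Y. t_Psi \<psi> (t_bracket br \<mu> X Y) = t_bracket br \<mu>' (t_Psi \<psi> X) (t_Psi \<psi> Y)) \<and>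
        (\<forall>X. t_Psi \<psi> (t_pmap br p \<omega> X) = t_pmap br p \<omega>' (t_Psi \<psi> X)))}"

end

theory Submission
  imports Defs
begin

locale rpa =
  fixes sc :: "'k::field \<Rightarrow> 'a::comm_ring \<Rightarrow> 'a"
    and br :: "'a \<Rightarrow> 'a \<Rightarrow> 'a"
    and p :: "'a \<Rightarrow> 'a"
  assumes char2: "CHAR('k) = 2"
    and rp: "restricted_poisson sc br p"
begin

lemma two_k: "(2::'k) = 0"
  using of_nat_CHAR[where 'a='k] char2 by simp

lemma kadd2: "(c::'k) + c = 0"
proof -
  have "c + c = 2 * c" by (rule mult_2[symmetric])
  also have "\<dots> = 0" by (simp add: two_k)
  finally show ?thesis .
qed

lemma md: "module sc" using rp unfolding restricted_poisson_def comm_algebra_def by blast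

lemma rl: "restricted_lie sc br p" using rp unfolding restricted_poisson_def by blast

lemma add2: "(x::'a) + x = 0"
proof -
  have "x + x = sc 1 x + sc 1 x" using module.scale_one[OF md] by simp
  also have "\<dots> = sc (1 + 1) x" by (rule module.scale_left_distrib[OF md, symmetric])
  also have "\<dots> = 0" unfolding kadd2 by (rule module.scale_zero_left[OF md])
  finally show ?thesis .
qed

lemma add2': "(x::'a) + (x + y) = y"
  by (simp add: add.assoc[symmetric] add2)

lemma neg: "- (x::'a) = x"
proof -
  have "x = - x" using add2[of x] by (simp only: add_eq_0_iff)
  then show ?thesis by (rule sym)
qed

lemma diffp: "(x::'a) - y = x + y"
  by (simp only: diff_conv_add_uminus neg)

lemma eq_sum0: "((x::'a) = y) = (x + y = 0)"
  unfolding add_eq_0_iff neg by (rule eq_commute)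

lemma sum0_trans': "a + b = (0::'a) \<Longrightarrow> a + b = c \<Longrightarrow> c = 0"
  by (rule trans[OF sym])

lemma sum0_trans: "a + b = (0::'a) \<Longrightarrow> a + b = c + d \<Longrightarrow> c = d"
  by (rule eq_sum0[THEN iffD2], rule trans[OF sym])

lemmas R = rl[unfolded restricted_lie_def]

lemma brL: "br (x + y) z = br x z + br y z" using conjunct1[OF conjunct2[OF R]] by blast
lemma brR: "br x (y + z) = br x y + br x z" using conjunct1[OF conjunct2[OF conjunct2[OF R]]] by blast
lemma brsL: "br (sc c x) y = sc c (br x y)" using conjunct1[OF conjunct2[OF conjunct2[OF conjunct2[OF R]]]] by blast
lemma brsR: "br x (sc c y) = sc c (br x y)" using conjunct1[OF conjunct2[OF conjunct2[OF conjunct2[OF conjunct2[OF R]]]]] by blast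
lemma bralt: "br x x = 0" using conjunct1[OF conjunct2[OF conjunct2[OF conjunct2[OF conjunct2[OF conjunct2[OF R]]]]]] by blast
lemma jac: "br x (br y z) + br y (br z x) + br z (br x y) = 0" using conjunct1[OF conjunct2[OF conjunct2[OF conjunct2[OF conjunct2[OF conjunct2[OF conjunct2[OF R]]]]]]] by blast
lemma psc: "p (sc c x) = sc (c * c) (p x)" using conjunct1[OF conjunct2[OF conjunct2[OF conjunct2[OF conjunct2[OF conjunct2[OF conjunct2[OF conjunct2[OF R]]]]]]]] by blast
lemma pad: "br (p x) y = br x (br x y)" using conjunct1[OF conjunct2[OF conjunct2[OF conjunct2[OF conjunct2[OF conjunct2[OF conjunct2[OF conjunct2[OF conjunct2[OF R]]]]]]]]] by blast
lemma padd: "p (x + y) = p x + p y + br x y" using conjunct2[OF conjunct2[OF conjunct2[OF conjunct2[OF conjunct2[OF conjunct2[OF conjunct2[OF conjunct2[OF conjunct2[OF R]]]]]]]]] by blast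

lemma br0L: "br 0 y = 0" using brL[of 0 0 y] by simp
lemma br0R: "br y 0 = 0" using brR[of y 0 0] by simp

lemma brsym: "br x y = br y x"
proof -
  have "br x y + br y x = br (x + y) (x + y)" by (simp add: brL brR bralt[of x] bralt[of y])
  also have "\<dots> = 0" by (rule bralt)
  finally have "br x y + br y x = 0" .
  then show ?thesis by (rule eq_sum0[THEN iffD2])
qed

lemma pad': "br y (p x) = br x (br x y)" by (subst brsym) (rule pad)

lemma X2_facts:
  assumes "X2 sc \<mu>"
  shows "\<mu> (x + y) z = \<mu> x z + \<mu> y z" "\<mu> z (x + y) = \<mu> z x + \<mu> z y"
    "\<mu> (sc c x) z = sc c (\<mu> x z)" "\<mu> z (sc c x) = sc c (\<mu> z x)"
    "\<mu> x x = 0" "\<mu> (x * y) z = x * \<mu> y z + y * \<mu> x z" "\<mu> z (x * y) = x * \<mu> z y + y * \<mu> z x"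
  using assms unfolding X2_def derivation_def klinear_def by auto

lemma mu0:
  assumes "X2 sc \<mu>"
  shows "\<mu> 0 y = 0" "\<mu> y 0 = 0"
  using X2_facts(1)[OF assms, of 0 0 y] X2_facts(2)[OF assms, of y 0 0] by simp_all

lemma musym:
  assumes "X2 sc \<mu>"
  shows "\<mu> x y = \<mu> y x"
proof -
  have "\<mu> x y + \<mu> y x = \<mu> (x + y) (x + y)" by (simp add: X2_facts(1,2)[OF assms] X2_facts(5)[OF assms, of x] X2_facts(5)[OF assms, of y])
  also have "\<dots> = 0" by (rule X2_facts(5)[OF assms])
  finally have "\<mu> x y + \<mu> y x = 0" .
  then show ?thesis by (rule eq_sum0[THEN iffD2])
qed


lemmas ns = add_ac add2 add2' neg diffp brL brR br0L br0R brsym pad pad'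

lemma kcomm0: "(c::'k) * d + d * c = 0" by (simp add: mult.commute[of d c] kadd2)

lemma dual_simps: "re (l + m) = re l + re m" "ep (l + m) = ep l + ep m"
  "re (l * m) = re l * re m" "ep (l * m) = re l * ep m + ep l * re m"
  "re (1::'k dual) = 1" "ep (1::'k dual) = 0"
  by (simp_all add: plus_dual_def times_dual_def one_dual_def)

lemmas mds = module.scale_right_distrib[OF md] module.scale_left_distrib[OF md]
  module.scale_scale[OF md] module.scale_one[OF md] module.scale_zero_left[OF md]
  module.scale_zero_right[OF md]

lemma dual_module: "module (dual_scale sc)"
  unfolding module_def dual_scale_def
  by (auto simp: dual_simps mds add_ac algebra_simps)

lemma Z2_rl:
  assumes "(\<mu>, \<omega>) \<in> Z2 sc br p"
  shows "restricted_lie (dual_scale sc) (t_bracket br \<mu>) (t_pmap br p \<omega>)"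
proof -
  have X: "X2 sc \<mu>" and osc: "\<And>c x. \<omega> (sc c x) = sc (c * c) (\<omega> x)"
    and oadd: "\<And>x y. \<omega> (x + y) = \<omega> x + \<omega> y + \<mu> x y"
    and D: "\<And>x y z. dCE2 br \<mu> x y z = 0" and E: "\<And>x z. delta2 br p \<mu> \<omega> x z = 0"
    using assms unfolding Z2_def C2_def by (auto dest: fun_cong)
  note mr = X2_facts(1-5)[OF X] mu0[OF X] musym[OF X]
  show ?thesis
    unfolding restricted_lie_def
  proof (intro conjI allI)
    show "module (dual_scale sc)" by (rule dual_module)
  next
    fix X Y Z :: "'a \<times> 'a"
    show "t_bracket br \<mu> (X + Y) Z = t_bracket br \<mu> X Z + t_bracket br \<mu> Y Z"
      by (simp add: t_bracket_def prod_eq_iff ns mr)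
    show "t_bracket br \<mu> X (Y + Z) = t_bracket br \<mu> X Y + t_bracket br \<mu> X Z"
      by (simp add: t_bracket_def prod_eq_iff ns mr)
  next
    fix c :: "'k dual" and X Y :: "'a \<times> 'a"
    show "t_bracket br \<mu> (dual_scale sc c X) Y = dual_scale sc c (t_bracket br \<mu> X Y)"
      by (simp add: t_bracket_def dual_scale_def prod_eq_iff ns mr brsL brsR mds)
    show "t_bracket br \<mu> X (dual_scale sc c Y) = dual_scale sc c (t_bracket br \<mu> X Y)"
      by (simp add: t_bracket_def dual_scale_def prod_eq_iff ns mr brsL brsR mds)
  next
    fix X :: "'a \<times> 'a"
    show "t_bracket br \<mu> X X = 0"
      by (simp add: t_bracket_def prod_eq_iff ns mr bralt)
  next
    fix X Y Z :: "'a \<times> 'a"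
    obtain a a' where x: "X = (a, a')" by (cases X)
    obtain b b' where y: "Y = (b, b')" by (cases Y)
    obtain c c' where z: "Z = (c, c')" by (cases Z)
    let ?S = "t_bracket br \<mu> X (t_bracket br \<mu> Y Z) + t_bracket br \<mu> Y (t_bracket br \<mu> Z X) + t_bracket br \<mu> Z (t_bracket br \<mu> X Y)"
    have 1: "fst ?S = 0" using jac by (simp add: x y z t_bracket_def)
    have "snd ?S = (br a (br b c') + br b (br c' a) + br c' (br a b))
       + (br a (br b' c) + br b' (br c a) + br c (br a b'))
       + (br a' (br b c) + br b (br c a') + br c (br a' b))
       + dCE2 br \<mu> a b c"
      by (simp add: x y z t_bracket_def dCE2_def ns mr)
    then have 2: "snd ?S = 0" by (simp add: jac D)
    show "?S = 0" using 1 2 by (simp add: prod_eq_iff)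
  next
    fix c :: "'k dual" and X :: "'a \<times> 'a"
    show "t_pmap br p \<omega> (dual_scale sc c X) = dual_scale sc (c * c) (t_pmap br p \<omega> X)"
      by (simp add: t_pmap_def dual_scale_def prod_eq_iff ns brsL brsR mds bralt psc osc dual_simps kcomm0)
  next
    fix X Y :: "'a \<times> 'a"
    obtain a b where x: "X = (a, b)" by (cases X)
    obtain c d where y: "Y = (c, d)" by (cases Y)
    have 1: "fst (t_bracket br \<mu> (t_pmap br p \<omega> X) Y) = fst (t_bracket br \<mu> X (t_bracket br \<mu> X Y))"
      by (simp add: x y t_bracket_def t_pmap_def pad)
    have "snd (t_bracket br \<mu> (t_pmap br p \<omega> X) Y) + snd (t_bracket br \<mu> X (t_bracket br \<mu> X Y))
       = (br a (br b c) + br b (br c a) + br c (br a b)) + delta2 br p \<mu> \<omega> a c"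
      by (simp add: x y t_bracket_def t_pmap_def delta2_def ns mr)
    then have "snd (t_bracket br \<mu> (t_pmap br p \<omega> X) Y) + snd (t_bracket br \<mu> X (t_bracket br \<mu> X Y)) = 0"
      by (simp add: jac E)
    then have 2: "snd (t_bracket br \<mu> (t_pmap br p \<omega> X) Y) = snd (t_bracket br \<mu> X (t_bracket br \<mu> X Y))"
      by (rule eq_sum0[THEN iffD2])
    show "t_bracket br \<mu> (t_pmap br p \<omega> X) Y = t_bracket br \<mu> X (t_bracket br \<mu> X Y)"
      using 1 2 by (simp add: prod_eq_iff)
  next
    fix X Y :: "'a \<times> 'a"
    show "t_pmap br p \<omega> (X + Y) = t_pmap br p \<omega> X + t_pmap br p \<omega> Y + t_bracket br \<mu> X Y"
      by (simp add: t_pmap_def t_bracket_def prod_eq_iff ns mr padd oadd)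
  qed
qed



lemma rl_Z2:
  assumes C: "(\<mu>, \<omega>) \<in> C2 sc"
    and R: "restricted_lie (dual_scale sc) (t_bracket br \<mu>) (t_pmap br p \<omega>)"
  shows "(\<mu>, \<omega>) \<in> Z2 sc br p"
proof -
  have X: "X2 sc \<mu>" using C unfolding C2_def by auto
  note mr = X2_facts(1-5)[OF X] mu0[OF X] musym[OF X]
  have J: "\<And>X Y Z. t_bracket br \<mu> X (t_bracket br \<mu> Y Z) + t_bracket br \<mu> Y (t_bracket br \<mu> Z X) + t_bracket br \<mu> Z (t_bracket br \<mu> X Y) = 0"
    and P: "\<And>X Y. t_bracket br \<mu> (t_pmap br p \<omega> X) Y = t_bracket br \<mu> X (t_bracket br \<mu> X Y)"
    using R unfolding restricted_lie_def by auto
  have D: "dCE2 br \<mu> x y z = 0" for x y z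
  proof -
    let ?S = "t_bracket br \<mu> (x,0) (t_bracket br \<mu> (y,0) (z,0)) + t_bracket br \<mu> (y,0) (t_bracket br \<mu> (z,0) (x,0)) + t_bracket br \<mu> (z,0) (t_bracket br \<mu> (x,0) (y,0))"
    have "snd ?S = dCE2 br \<mu> x y z"
      by (simp add: t_bracket_def dCE2_def ns mr)
    then show ?thesis using J[of "(x,0)" "(y,0)" "(z,0)"] by simp
  qed
  have E: "delta2 br p \<mu> \<omega> x z = 0" for x z
  proof -
    have "snd (t_bracket br \<mu> (t_pmap br p \<omega> (x,0)) (z,0)) = snd (t_bracket br \<mu> (x,0) (t_bracket br \<mu> (x,0) (z,0)))"
      using P by simp
    then have "snd (t_bracket br \<mu> (t_pmap br p \<omega> (x,0)) (z,0)) + snd (t_bracket br \<mu> (x,0) (t_bracket br \<mu> (x,0) (z,0))) = 0"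
      by (rule eq_sum0[THEN iffD1])
    moreover have "snd (t_bracket br \<mu> (t_pmap br p \<omega> (x,0)) (z,0)) + snd (t_bracket br \<mu> (x,0) (t_bracket br \<mu> (x,0) (z,0))) = delta2 br p \<mu> \<omega> x z"
      by (simp add: t_bracket_def t_pmap_def delta2_def ns mr)
    ultimately show ?thesis by (rule sum0_trans')
  qed
  show ?thesis using C D E unfolding Z2_def by (auto intro!: ext)
qed

lemma Z2_eq: "inf_deformations sc br p = Z2 sc br p"
proof
  show "inf_deformations sc br p \<subseteq> Z2 sc br p"
    unfolding inf_deformations_def using rl_Z2 by auto
  show "Z2 sc br p \<subseteq> inf_deformations sc br p"
    unfolding inf_deformations_def using Z2_rl by (auto simp: Z2_def)
qed

lemma equiv_iff:
  assumes Z: "(\<mu>, \<omega>) \<in> Z2 sc br p" and Z': "(\<mu>', \<omega>') \<in> Z2 sc br p"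
  shows "(\<exists>\<psi>. klinear sc \<psi> \<and> bij (t_Psi \<psi>) \<and>
        (\<forall>X Y. t_Psi \<psi> (t_mult X Y) = t_mult (t_Psi \<psi> X) (t_Psi \<psi> Y)) \<and>
        (\<forall>X Y. t_Psi \<psi> (t_bracket br \<mu> X Y) = t_bracket br \<mu>' (t_Psi \<psi> X) (t_Psi \<psi> Y)) \<and>
        (\<forall>X. t_Psi \<psi> (t_pmap br p \<omega> X) = t_pmap br p \<omega>' (t_Psi \<psi> X)))
     \<longleftrightarrow> (\<exists>\<psi>. derivation sc \<psi> \<and>
        (\<lambda>x y. \<mu> x y - \<mu>' x y) = dCE1 br \<psi> \<and> (\<lambda>x. \<omega> x - \<omega>' x) = delta1 br p \<psi>)"
proof -
  have X: "X2 sc \<mu>" using Z unfolding Z2_def C2_def by auto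
  have X': "X2 sc \<mu>'" using Z' unfolding Z2_def C2_def by auto
  note mr = X2_facts(1-5)[OF X] mu0[OF X] musym[OF X]
  note mr' = X2_facts(1-5)[OF X'] mu0[OF X'] musym[OF X']
  show ?thesis
  proof
    assume "\<exists>\<psi>. klinear sc \<psi> \<and> bij (t_Psi \<psi>) \<and>
        (\<forall>X Y. t_Psi \<psi> (t_mult X Y) = t_mult (t_Psi \<psi> X) (t_Psi \<psi> Y)) \<and>
        (\<forall>X Y. t_Psi \<psi> (t_bracket br \<mu> X Y) = t_bracket br \<mu>' (t_Psi \<psi> X) (t_Psi \<psi> Y)) \<and>
        (\<forall>X. t_Psi \<psi> (t_pmap br p \<omega> X) = t_pmap br p \<omega>' (t_Psi \<psi> X))"
    then obtain \<psi> where kl: "klinear sc \<psi>"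
      and M: "\<And>X Y. t_Psi \<psi> (t_mult X Y) = t_mult (t_Psi \<psi> X) (t_Psi \<psi> Y)"
      and B: "\<And>X Y. t_Psi \<psi> (t_bracket br \<mu> X Y) = t_bracket br \<mu>' (t_Psi \<psi> X) (t_Psi \<psi> Y)"
      and W: "\<And>X. t_Psi \<psi> (t_pmap br p \<omega> X) = t_pmap br p \<omega>' (t_Psi \<psi> X)"
      by blast
    have ladd: "\<psi> (x + y) = \<psi> x + \<psi> y" for x y using kl unfolding klinear_def by auto
    have der: "derivation sc \<psi>"
      unfolding derivation_def
    proof (intro conjI allI kl)
      fix x y
      have "snd (t_Psi \<psi> (t_mult (x,0) (y,0))) = snd (t_mult (t_Psi \<psi> (x,0)) (t_Psi \<psi> (y,0)))"
        using M by simp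
      then show "\<psi> (x * y) = x * \<psi> y + y * \<psi> x"
        by (simp add: t_Psi_def t_mult_def mult.commute)
    qed
    have d1: "\<mu> x y - \<mu>' x y = dCE1 br \<psi> x y" for x y
    proof -
      have "snd (t_Psi \<psi> (t_bracket br \<mu> (x,0) (y,0))) = snd (t_bracket br \<mu>' (t_Psi \<psi> (x,0)) (t_Psi \<psi> (y,0)))"
        using B by simp
      then have "snd (t_Psi \<psi> (t_bracket br \<mu> (x,0) (y,0))) + snd (t_bracket br \<mu>' (t_Psi \<psi> (x,0)) (t_Psi \<psi> (y,0))) = 0"
        by (rule eq_sum0[THEN iffD1])
      moreover have "snd (t_Psi \<psi> (t_bracket br \<mu> (x,0) (y,0))) + snd (t_bracket br \<mu>' (t_Psi \<psi> (x,0)) (t_Psi \<psi> (y,0)))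
         = (\<mu> x y - \<mu>' x y) + dCE1 br \<psi> x y"
        by (simp add: t_Psi_def t_bracket_def dCE1_def ns mr mr' ladd)
      ultimately show ?thesis by (rule sum0_trans)
    qed
    have d2: "\<omega> x - \<omega>' x = delta1 br p \<psi> x" for x
    proof -
      have "snd (t_Psi \<psi> (t_pmap br p \<omega> (x,0))) = snd (t_pmap br p \<omega>' (t_Psi \<psi> (x,0)))"
        using W by simp
      then have "snd (t_Psi \<psi> (t_pmap br p \<omega> (x,0))) + snd (t_pmap br p \<omega>' (t_Psi \<psi> (x,0))) = 0"
        by (rule eq_sum0[THEN iffD1])
      moreover have "snd (t_Psi \<psi> (t_pmap br p \<omega> (x,0))) + snd (t_pmap br p \<omega>' (t_Psi \<psi> (x,0)))
         = (\<omega> x - \<omega>' x) + delta1 br p \<psi> x"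
        by (simp add: t_Psi_def t_pmap_def delta1_def ns ladd)
      ultimately show ?thesis by (rule sum0_trans)
    qed
    show "\<exists>\<psi>. derivation sc \<psi> \<and>
        (\<lambda>x y. \<mu> x y - \<mu>' x y) = dCE1 br \<psi> \<and> (\<lambda>x. \<omega> x - \<omega>' x) = delta1 br p \<psi>"
      using der d1 d2 by (intro exI[of _ \<psi>]) auto
  next
    assume "\<exists>\<psi>. derivation sc \<psi> \<and>
        (\<lambda>x y. \<mu> x y - \<mu>' x y) = dCE1 br \<psi> \<and> (\<lambda>x. \<omega> x - \<omega>' x) = delta1 br p \<psi>"
    then obtain \<psi> where der: "derivation sc \<psi>"
      and f1: "(\<lambda>x y. \<mu> x y - \<mu>' x y) = dCE1 br \<psi>"
      and f2: "(\<lambda>x. \<omega> x - \<omega>' x) = delta1 br p \<psi>"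
      by blast
    have h1: "\<mu> x y - \<mu>' x y = dCE1 br \<psi> x y" for x y
      using fun_cong[OF fun_cong[OF f1, of x], of y] by simp
    have h2: "\<omega> x - \<omega>' x = delta1 br p \<psi> x" for x
      using fun_cong[OF f2, of x] by simp
    have kl: "klinear sc \<psi>" using der unfolding derivation_def by auto
    have ladd: "\<psi> (x + y) = \<psi> x + \<psi> y" for x y using kl unfolding klinear_def by auto
    have lmul: "\<psi> (x * y) = x * \<psi> y + y * \<psi> x" for x y using der unfolding derivation_def by auto
    have bij: "bij (t_Psi \<psi>)"
    proof (rule bijI)
      show "inj (t_Psi \<psi>)"
        by (rule injI) (auto simp: t_Psi_def prod_eq_iff)
      show "surj (t_Psi \<psi>)"
      proof (rule surjI)
        fix Y :: "'a \<times> 'a"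
        show "t_Psi \<psi> (fst Y, snd Y - \<psi> (fst Y)) = Y" by (simp add: t_Psi_def)
      qed
    qed
    have M: "t_Psi \<psi> (t_mult X Y) = t_mult (t_Psi \<psi> X) (t_Psi \<psi> Y)" for X Y
      by (simp add: t_Psi_def t_mult_def lmul algebra_simps)
    have B: "t_Psi \<psi> (t_bracket br \<mu> X Y) = t_bracket br \<mu>' (t_Psi \<psi> X) (t_Psi \<psi> Y)" for X Y
    proof -
      obtain a b where x: "X = (a, b)" by (cases X)
      obtain c d where y: "Y = (c, d)" by (cases Y)
      have "snd (t_Psi \<psi> (t_bracket br \<mu> X Y)) + snd (t_bracket br \<mu>' (t_Psi \<psi> X) (t_Psi \<psi> Y))
          = (\<mu> a c - \<mu>' a c) + dCE1 br \<psi> a c"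
        by (simp add: x y t_Psi_def t_bracket_def dCE1_def ns mr mr' ladd)
      then have "snd (t_Psi \<psi> (t_bracket br \<mu> X Y)) + snd (t_bracket br \<mu>' (t_Psi \<psi> X) (t_Psi \<psi> Y)) = 0"
        by (simp add: h1 add2)
      then have "snd (t_Psi \<psi> (t_bracket br \<mu> X Y)) = snd (t_bracket br \<mu>' (t_Psi \<psi> X) (t_Psi \<psi> Y))"
        by (rule eq_sum0[THEN iffD2])
      then show ?thesis by (simp add: prod_eq_iff x y t_Psi_def t_bracket_def)
    qed
    have W: "t_Psi \<psi> (t_pmap br p \<omega> X) = t_pmap br p \<omega>' (t_Psi \<psi> X)" for X
    proof -
      obtain a b where x: "X = (a, b)" by (cases X)
      have "snd (t_Psi \<psi> (t_pmap br p \<omega> X)) + snd (t_pmap br p \<omega>' (t_Psi \<psi> X))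
          = (\<omega> a - \<omega>' a) + delta1 br p \<psi> a"
        by (simp add: x t_Psi_def t_pmap_def delta1_def ns ladd)
      then have "snd (t_Psi \<psi> (t_pmap br p \<omega> X)) + snd (t_pmap br p \<omega>' (t_Psi \<psi> X)) = 0"
        by (simp add: h2 add2)
      then have "snd (t_Psi \<psi> (t_pmap br p \<omega> X)) = snd (t_pmap br p \<omega>' (t_Psi \<psi> X))"
        by (rule eq_sum0[THEN iffD2])
      then show ?thesis by (simp add: prod_eq_iff x t_Psi_def t_pmap_def)
    qed
    show "\<exists>\<psi>. klinear sc \<psi> \<and> bij (t_Psi \<psi>) \<and>
        (\<forall>X Y. t_Psi \<psi> (t_mult X Y) = t_mult (t_Psi \<psi> X) (t_Psi \<psi> Y)) \<and>
        (\<forall>X Y. t_Psi \<psi> (t_bracket br \<mu> X Y) = t_bracket br \<mu>' (t_Psi \<psi> X) (t_Psi \<psi> Y)) \<and>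
        (\<forall>X. t_Psi \<psi> (t_pmap br p \<omega> X) = t_pmap br p \<omega>' (t_Psi \<psi> X))"
      using kl bij M B W by blast
  qed
qed

lemma rel_eq: "deformation_equiv sc br p = coh_rel sc br p"
proof (rule set_eqI)
  fix r :: "((('a \<Rightarrow> 'a \<Rightarrow> 'a) \<times> ('a \<Rightarrow> 'a)) \<times> (('a \<Rightarrow> 'a \<Rightarrow> 'a) \<times> ('a \<Rightarrow> 'a)))"
  obtain a b c d where r: "r = ((a, b), (c, d))" by (metis prod.collapse)
  show "r \<in> deformation_equiv sc br p \<longleftrightarrow> r \<in> coh_rel sc br p"
    unfolding r deformation_equiv_def coh_rel_def Z2_eq mem_Collect_eq prod.case
    by (intro conj_cong refl) (rule equiv_iff; assumption)
qed

end

theorem mainTheorem6: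
  fixes sc :: "'k::field \<Rightarrow> 'a::comm_ring \<Rightarrow> 'a"
    and br :: "'a \<Rightarrow> 'a \<Rightarrow> 'a"
    and p :: "'a \<Rightarrow> 'a"
  assumes "CHAR('k) = 2"
    and "restricted_poisson sc br p"
  shows "\<exists>F. bij_betw F (inf_deformations sc br p // deformation_equiv sc br p) (H2 sc br p) \<and>
           (\<forall>D \<in> inf_deformations sc br p.
              F (deformation_equiv sc br p `` {D}) = coh_rel sc br p `` {D})"
proof -
  interpret rpa sc br p using assms by (unfold_locales)
  show ?thesis
    by (intro exI[of _ id]) (simp add: H2_def Z2_eq rel_eq bij_betw_id)
qed

end
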